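(* Let $\mathfrak{D}=[a,b]=\prod_{i=1}^d [a_i,b_i]\subseteq\mathbb{R}^d$ with $a_i<b_i$, and let $n_0\ge 1$ and $t\ge 1$ be integers. Consider a stochastic algorithm which, at each iteration $n\ge n_0$, generates random candidate points $Y_{n,1},\dots,Y_{n,t}\in\mathfrak{D}$ as follows. Let $\mathcal{E}_{n-1}$ denote the collection of all random vectors generated before iteration $n$, and $\sigma(\mathcal{E}_{n-1})$ the $\sigma$-field they generate; the current best point $x_n^*\in\mathfrak{D}$ is $\sigma(\mathcal{E}_{n-1})$-measurable. For each $j=1,\dots,t$ and each coordinate $i=1,\dots,d$, conditionally on $\sigma(\mathcal{E}_{n-1})$ and independently over $i$: with probability $P_{n,i}$ the coordinate is perturbed, i.e. $\tilde Y_{n,j,i}=x^*_{n,i}+Z_{n,j,i}$, where $Z_{n,j,i}$ has a continuous (conditional) probability density $F_{n,j,i}$ on $\mathbb{R}$; otherwise $\tilde Y_{n,j,i}=x^*_{n,i}$. If $\tilde Y_{n,j}\notin\mathfrak{D}$ it is replaced by a point of $\mathfrak{D}$ (e.g. the nearest point in $\mathfrak{D}$), and $Y_{n,j}$ is the resulting point; if $\tilde Y_{n,j}\in\mathfrak{D}$ then $Y_{n,j}=\tilde Y_{n,j}$. Here $P_{n,i}$ and $F_{n,j,i}$ may depend on $\sigma(\mathcal{E}_{n-1})$. Suppose there exist constants $C_1>0$ and $C_2>0$ such that for every $n\ge n_0$, every $1\le i\le d$ and every $j=1,\dots,t$, we have $P_{n,i}>C_1$ and $F_{n,j,i}(z)>C_2$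 for all $z\in[-(b_i-a_i),\,b_i-a_i]$. Then the following condition holds: for every $j=1,\dots,t$, every $x\in\mathfrak{D}$ and every $\delta>0$ there exists $\nu_j(x,\delta)>0$ such that $$P\big[Y_{n,j}\in B(x,\delta)\cap\mathfrak{D}\ \big|\ \sigma(\mathcal{E}_{n-1})\big]\ge \nu_j(x,\delta)\quad\text{almost surely, for all } n\ge n_0,$$ where $B(x,\delta)$ is the open Euclidean ball of radius $\delta$ centered at $x$.
   Context: This is the candidate-point generation step of a stochastic response-surface global optimization method on the box $\mathfrak{D}$; the candidate points are perturbations of the current best point $x_n^*$ in a random subset of coordinates. The conclusion is the condition (called Condition [2] in the paper) under which such methods converge to the global minimum almost surely. *)

theory Defs
  imports "HOL-Analysis.Analysis" "HOL-Probability.Probability"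
begin

definition cond_prob_given :: "'a measure \<Rightarrow> 'a measure \<Rightarrow> 'a set \<Rightarrow> 'a \<Rightarrow> real" where
  "cond_prob_given M F A = real_cond_exp M F (indicator A)"

end

theory Submission imports Defs begin

lemma int_bound:
  fixes f :: "real \<Rightarrow> real"
  assumes fi: "integrable lborel f" and fc: "continuous_on UNIV f" and f0: "\<forall>z. 0 \<le> f z"
    and lh: "lo \<le> hi" and "A \<le> lo" "hi \<le> B" "A \<le> c" "c \<le> B"
    and fb: "\<forall>z\<in>{-(B-A)..B-A}. f z > C2"
  shows "C2*(hi-lo) \<le> (LINT z|lborel. indicator {lo..hi} (c+z) * f z)"
proof -
  have eq: "(\<lambda>z. indicator {lo..hi} (c+z) * f z) = (\<lambda>z. indicator {lo-c..hi-c} z * f z)"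
    by (auto simp: indicator_def fun_eq_iff)
  have fm: "f \<in> borel_measurable borel" using fc by (simp add: borel_measurable_continuous_onI)
  have i1: "integrable lborel (\<lambda>z. indicator {lo-c..hi-c} z * C2)"
    by (simp add: integrable_real_mult_indicator emeasure_lborel_Icc_eq)
  have i2: "integrable lborel (\<lambda>z. indicator {lo-c..hi-c} z * f z)"
    using integrable_mult_indicator[OF _ fi, of "{lo-c..hi-c}"] by simp
  have "(LINT z|lborel. indicator {lo-c..hi-c} z * C2) \<le> (LINT z|lborel. indicator {lo-c..hi-c} z * f z)"
  proof (rule integral_mono[OF i1 i2])
    fix z show "indicator {lo-c..hi-c} z * C2 \<le> indicator {lo-c..hi-c} z * f z"
    proof (cases "z \<in> {lo-c..hi-c}")
      case True
      then have "z \<in> {-(B-A)..B-A}" using assms by auto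
      then show ?thesis using fb True by (auto simp: less_imp_le)
    qed simp
  qed
  moreover have "(LINT z|lborel. indicator {lo-c..hi-c} z * C2) = C2*(hi-lo)"
    using lh by (simp add: mult.commute)
  ultimately show ?thesis using eq lh by (simp add: mult.commute)
qed

theorem proposition1:
  fixes M :: "'w measure"
    and F :: "nat \<Rightarrow> 'w measure"
    and a b :: "real ^ 'd"
    and n0 t :: nat
    and xs :: "nat \<Rightarrow> 'w \<Rightarrow> real ^ 'd"
    and p :: "nat \<Rightarrow> 'd \<Rightarrow> 'w \<Rightarrow> real"
    and f :: "nat \<Rightarrow> nat \<Rightarrow> 'd \<Rightarrow> 'w \<Rightarrow> real \<Rightarrow> real"
    and Yt Y :: "nat \<Rightarrow> nat \<Rightarrow> 'w \<Rightarrow> real ^ 'd"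
  assumes prob: "prob_space M"
    and ab: "\<forall>i. a $ i < b $ i"
    and n0: "n0 \<ge> 1" and t: "t \<ge> 1"
    and subalg: "\<forall>n\<ge>n0. subalgebra M (F n)"
    and xs_meas: "\<forall>n\<ge>n0. xs n \<in> borel_measurable (F n)"
    and xs_in: "\<forall>n\<ge>n0. \<forall>\<omega>\<in>space M. xs n \<omega> \<in> cbox a b"
    and p_meas: "\<forall>n\<ge>n0. \<forall>i. p n i \<in> borel_measurable (F n)"
    and p_prob: "\<forall>n\<ge>n0. \<forall>i. \<forall>\<omega>\<in>space M. 0 \<le> p n i \<omega> \<and> p n i \<omega> \<le> 1"
    and f_dens: "\<forall>n\<ge>n0. \<forall>j\<in>{1..t}. \<forall>i. \<forall>\<omega>\<in>space M.
        continuous_on UNIV (f n j i \<omega>) \<and> (\<forall>z. 0 \<le> f n j i \<omega> z) \<and>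
        integrable lborel (f n j i \<omega>) \<and> (LINT z|lborel. f n j i \<omega> z) = 1"
    and Yt_meas: "\<forall>n\<ge>n0. \<forall>j\<in>{1..t}. Yt n j \<in> borel_measurable M"
    and Y_meas: "\<forall>n\<ge>n0. \<forall>j\<in>{1..t}. Y n j \<in> borel_measurable M"
    and Yt_law: "\<forall>n\<ge>n0. \<forall>j\<in>{1..t}. \<forall>A :: 'd \<Rightarrow> real set. (\<forall>i. A i \<in> sets borel) \<longrightarrow>
        (AE \<omega> in M. cond_prob_given M (F n) {\<eta>\<in>space M. \<forall>i. Yt n j \<eta> $ i \<in> A i} \<omega> =
           (\<Prod>i\<in>UNIV. (1 - p n i \<omega>) * indicator (A i) (xs n \<omega> $ i)
              + p n i \<omega> * (LINT z|lborel. indicator (A i) (xs n \<omega> $ i + z) * f n j i \<omega> z)))"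
    and Y_repair: "\<forall>n\<ge>n0. \<forall>j\<in>{1..t}. \<forall>\<omega>\<in>space M.
        Y n j \<omega> \<in> cbox a b \<and> (Yt n j \<omega> \<in> cbox a b \<longrightarrow> Y n j \<omega> = Yt n j \<omega>)"
    and bounds: "\<exists>C1>0. \<exists>C2>0. \<forall>n\<ge>n0. \<forall>i. \<forall>j\<in>{1..t}. \<forall>\<omega>\<in>space M.
        p n i \<omega> > C1 \<and> (\<forall>z\<in>{-(b $ i - a $ i)..b $ i - a $ i}. f n j i \<omega> z > C2)"
  shows "\<forall>j\<in>{1..t}. \<forall>x\<in>cbox a b. \<forall>\<delta>>0. \<exists>\<nu>>0. \<forall>n\<ge>n0.
           AE \<omega> in M. cond_prob_given M (F n) {\<eta>\<in>space M. Y n j \<eta> \<in> ball x \<delta> \<inter> cbox a b} \<omega> \<ge> \<nu>"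
proof (intro ballI allI impI)
  fix j x and \<delta> :: real
  assume j: "j \<in> {1..t}" and x: "x \<in> cbox a b" and d: "\<delta> > 0"
  obtain C1 C2 where C1: "C1 > 0" and C2: "C2 > 0" and CB: "\<forall>n\<ge>n0. \<forall>i. \<forall>j\<in>{1..t}. \<forall>\<omega>\<in>space M.
        p n i \<omega> > C1 \<and> (\<forall>z\<in>{-(b $ i - a $ i)..b $ i - a $ i}. f n j i \<omega> z > C2)"
    using bounds by blast
  define e where "e = \<delta> / (2 * real CARD('d))"
  have e: "e > 0" using d by (simp add: e_def)
  define lo where "lo = (\<chi> i. max (a$i) (x$i - e))"
  define hi where "hi = (\<chi> i. min (b$i) (x$i + e))"
  have xi: "\<And>i. a$i \<le> x$i \<and> x$i \<le> b$i" using x by (simp add: mem_box_cart)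
  have lohi: "\<And>i. lo$i < hi$i" using xi e ab unfolding lo_def hi_def
    by (smt (verit) vec_lambda_beta)
  have loa: "\<And>i. a$i \<le> lo$i" and hib: "\<And>i. hi$i \<le> b$i" unfolding lo_def hi_def by auto
  define \<nu> where "\<nu> = (\<Prod>i\<in>UNIV. C1*C2*(hi$i - lo$i))"
  have nu: "\<nu> > 0" unfolding \<nu>_def using C1 C2 lohi by (intro prod_pos) simp
  show "\<exists>\<nu>>0. \<forall>n\<ge>n0.
           AE \<omega> in M. cond_prob_given M (F n) {\<eta>\<in>space M. Y n j \<eta> \<in> ball x \<delta> \<inter> cbox a b} \<omega> \<ge> \<nu>"
  proof (intro exI[of _ \<nu>] conjI allI impI nu)
    fix n assume n: "n \<ge> n0"
    interpret ps: prob_space M by (rule prob)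
    interpret fs: finite_measure_subalgebra M "F n"
      by unfold_locales (use subalg n in auto)
    define A where "A = (\<lambda>i. {lo$i..hi$i})"
    define S where "S = {\<eta>\<in>space M. \<forall>i. Yt n j \<eta> $ i \<in> A i}"
    define T where "T = {\<eta>\<in>space M. Y n j \<eta> \<in> ball x \<delta> \<inter> cbox a b}"
    have Ytm: "Yt n j \<in> borel_measurable M" and Ym: "Y n j \<in> borel_measurable M"
      using Yt_meas Y_meas n j by auto
    have S_eq: "S = Yt n j -` cbox lo hi \<inter> space M"
      unfolding S_def A_def by (auto simp: mem_box_cart)
    have T_eq: "T = Y n j -` (ball x \<delta> \<inter> cbox a b) \<inter> space M" unfolding T_def by auto
    have Ss: "S \<in> sets M" unfolding S_eq by (rule measurable_sets[OF Ytm]) simp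
    have Ts: "T \<in> sets M" unfolding T_eq by (rule measurable_sets[OF Ym]) simp
    have ST: "S \<subseteq> T"
    proof
      fix \<eta> assume "\<eta> \<in> S"
      then have \<eta>: "\<eta> \<in> space M" and yl: "Yt n j \<eta> \<in> cbox lo hi" unfolding S_eq by auto
      have "Yt n j \<eta> \<in> cbox a b" using yl loa hib unfolding mem_box_cart
        by (meson order_trans)
      then have Y: "Y n j \<eta> = Yt n j \<eta>" and "Y n j \<eta> \<in> cbox a b" using Y_repair n j \<eta> by auto
      have "dist x (Yt n j \<eta>) \<le> (\<Sum>i\<in>UNIV. \<bar>(x - Yt n j \<eta>)$i\<bar>)"
        unfolding dist_norm by (rule norm_le_l1_cart)
      also have "\<dots> \<le> (\<Sum>i\<in>(UNIV::'d set). e)"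
      proof (rule sum_mono)
        fix i
        have "lo$i \<le> Yt n j \<eta> $ i" "Yt n j \<eta> $ i \<le> hi$i" using yl by (auto simp: mem_box_cart)
        then show "\<bar>(x - Yt n j \<eta>)$i\<bar> \<le> e" unfolding lo_def hi_def by auto
      qed
      also have "\<dots> = \<delta>/2" using e_def by simp
      also have "\<dots> < \<delta>" using d by simp
      finally show "\<eta> \<in> T" unfolding T_def using \<eta> Y \<open>Y n j \<eta> \<in> cbox a b\<close> by auto
    qed
    have law: "AE \<omega> in M. cond_prob_given M (F n) S \<omega> =
           (\<Prod>i\<in>UNIV. (1 - p n i \<omega>) * indicator (A i) (xs n \<omega> $ i)
              + p n i \<omega> * (LINT z|lborel. indicator (A i) (xs n \<omega> $ i + z) * f n j i \<omega> z))"
    proof -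
      have "\<forall>i. A i \<in> sets borel" unfolding A_def by simp
      then show ?thesis unfolding S_def using Yt_law n j by blast
    qed
    have mono: "AE \<omega> in M. cond_prob_given M (F n) S \<omega> \<le> cond_prob_given M (F n) T \<omega>"
      unfolding cond_prob_given_def
    proof (rule fs.real_cond_exp_mono)
      show "AE \<omega> in M. indicat_real S \<omega> \<le> indicat_real T \<omega>" using ST
        by (intro AE_I2) (auto simp: indicator_def)
      show "integrable M (indicat_real S)" using Ss using ps.emeasure_finite by (intro integrable_real_indicator) (auto simp: less_top[symmetric])
      show "integrable M (indicat_real T)" using Ts using ps.emeasure_finite by (intro integrable_real_indicator) (auto simp: less_top[symmetric])
    qed
    have lb: "\<nu> \<le> (\<Prod>i\<in>UNIV. (1 - p n i \<omega>) * indicator (A i) (xs n \<omega> $ i)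
              + p n i \<omega> * (LINT z|lborel. indicator (A i) (xs n \<omega> $ i + z) * f n j i \<omega> z))"
      if \<omega>: "\<omega> \<in> space M" for \<omega>
      unfolding \<nu>_def
    proof (rule prod_mono, rule conjI)
      fix i
      have pp: "0 \<le> p n i \<omega>" "p n i \<omega> \<le> 1" using p_prob n \<omega> by auto
      have pC: "p n i \<omega> > C1" and fC: "\<forall>z\<in>{-(b $ i - a $ i)..b $ i - a $ i}. f n j i \<omega> z > C2"
        using CB n j \<omega> by auto
      have fd: "continuous_on UNIV (f n j i \<omega>)" "\<forall>z. 0 \<le> f n j i \<omega> z" "integrable lborel (f n j i \<omega>)"
        using f_dens n j \<omega> by auto
      have xsi: "a$i \<le> xs n \<omega> $ i" "xs n \<omega> $ i \<le> b$i" using xs_in n \<omega> by (auto simp: mem_box_cart)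
      have I: "C2*(hi$i-lo$i) \<le> (LINT z|lborel. indicator (A i) (xs n \<omega> $ i + z) * f n j i \<omega> z)"
        unfolding A_def
        by (rule int_bound[OF fd(3) fd(1) fd(2) less_imp_le[OF lohi] loa hib xsi fC])
      have "0 \<le> (1 - p n i \<omega>) * indicator (A i) (xs n \<omega> $ i)" using pp by simp
      moreover have "C1 * (C2*(hi$i-lo$i)) \<le> p n i \<omega> * (LINT z|lborel. indicator (A i) (xs n \<omega> $ i + z) * f n j i \<omega> z)"
        using pC I C1 C2 lohi[of i] by (intro mult_mono) auto
      ultimately show "C1*C2*(hi$i - lo$i) \<le> (1 - p n i \<omega>) * indicator (A i) (xs n \<omega> $ i)
              + p n i \<omega> * (LINT z|lborel. indicator (A i) (xs n \<omega> $ i + z) * f n j i \<omega> z)"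
        by (simp add: mult.assoc)
      show "0 \<le> C1*C2*(hi$i - lo$i)" using C1 C2 lohi[of i] by simp
    qed
    show "AE \<omega> in M. cond_prob_given M (F n) T \<omega> \<ge> \<nu>"
    proof -
      have "AE \<omega> in M. \<omega> \<in> space M" by (rule AE_space)
      with law mono show ?thesis
      proof eventually_elim
        case (elim \<omega>) then show ?case using lb[of \<omega>] by linarith
      qed
    qed
  qed
qed

end
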